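(* Let $n\in\{1,3,7\}$ and let $m:\mathbb{S}^n\times\mathbb{S}^n\to\mathbb{S}^n$ be the multiplication map of unit complex numbers, quaternions or octonions respectively. Then $L_m(\mathbb{S}^n\times\mathbb{S}^n)=\sqrt{2}$.
   Context: $\mathbb{S}^n$ is the unit round sphere and $\mathbb{S}^n\times\mathbb{S}^n$ has the product Riemannian metric with its geodesic distance. $L_g(M)$ denotes the Lipschitz constant of a map $g$ on $M$, i.e. the smallest $C$ with $d(g(a),g(b))\le C\,d(a,b)$ for all $a,b\in M$. *)

theory Defs
  imports "HOL-Analysis.Analysis"
begin

definition vinner :: "real list \<Rightarrow> real list \<Rightarrow> real" where
  "vinner x y = sum_list (map2 (*) x y)"

definition vadd :: "real list \<Rightarrow> real list \<Rightarrow> real list" where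
  "vadd x y = map2 (+) x y"

definition sph :: "nat \<Rightarrow> real list set" where
  "sph n = {x. length x = n + 1 \<and> vinner x x = 1}"

definition sph_dist :: "real list \<Rightarrow> real list \<Rightarrow> real" where
  "sph_dist x y = arccos (vinner x y)"

text \<open>Geodesic distance of the product Riemannian metric on S^n x S^n.\<close>
definition prod_dist :: "real list \<times> real list \<Rightarrow> real list \<times> real list \<Rightarrow> real" where
  "prod_dist p q = sqrt ((sph_dist (fst p) (fst q))^2 + (sph_dist (snd p) (snd q))^2)"

text \<open>Cayley--Dickson construction on R^(2^k): level 0 = reals, 1 = complex numbers,
  2 = quaternions, 3 = octonions.  (a,b)^* = (a^*, -b),
  (a,b)(c,d) = (ac - d^* b, d a + b c^*).\<close>
fun cd_conj :: "nat \<Rightarrow> real list \<Rightarrow> real list" where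
  "cd_conj 0 x = x"
| "cd_conj (Suc k) x = cd_conj k (take (2^k) x) @ map uminus (drop (2^k) x)"

fun cd_mult :: "nat \<Rightarrow> real list \<Rightarrow> real list \<Rightarrow> real list" where
  "cd_mult 0 x y = [hd x * hd y]"
| "cd_mult (Suc k) x y =
     (let a = take (2^k) x; b = drop (2^k) x; c = take (2^k) y; d = drop (2^k) y
      in vadd (cd_mult k a c) (map uminus (cd_mult k (cd_conj k d) b))
         @ vadd (cd_mult k d a) (cd_mult k b (cd_conj k c)))"

definition lip_const :: "'a set \<Rightarrow> ('a \<Rightarrow> 'a \<Rightarrow> real) \<Rightarrow> ('b \<Rightarrow> 'b \<Rightarrow> real) \<Rightarrow> ('a \<Rightarrow> 'b) \<Rightarrow> real" where
  "lip_const M dM dN g = Inf {C. \<forall>a\<in>M. \<forall>b\<in>M. dN (g a) (g b) \<le> C * dM a b}"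

end

theory Submission
  imports Defs
begin

lemma cm2s: "cd_mult 2 x y = vadd (cd_mult 1 (take 2 x) (take 2 y)) (map uminus (cd_mult 1 (cd_conj 1 (drop 2 y)) (drop 2 x))) @ vadd (cd_mult 1 (drop 2 y) (take 2 x)) (cd_mult 1 (drop 2 x) (cd_conj 1 (take 2 y)))"
proof -
  have "cd_mult (Suc 1) x y = vadd (cd_mult 1 (take (2^1) x) (take (2^1) y)) (map uminus (cd_mult 1 (cd_conj 1 (drop (2^1) y)) (drop (2^1) x))) @ vadd (cd_mult 1 (drop (2^1) y) (take (2^1) x)) (cd_mult 1 (drop (2^1) x) (cd_conj 1 (take (2^1) y)))"
    by (simp only: cd_mult.simps(2) Let_def)
  thus ?thesis by (simp only: power_one_right Suc_1)
qed
lemma cm3s: "cd_mult 3 x y = vadd (cd_mult 2 (take 4 x) (take 4 y)) (map uminus (cd_mult 2 (cd_conj 2 (drop 4 y)) (drop 4 x))) @ vadd (cd_mult 2 (drop 4 y) (take 4 x)) (cd_mult 2 (drop 4 x) (cd_conj 2 (take 4 y)))"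
proof -
  have "cd_mult (Suc 2) x y = vadd (cd_mult 2 (take (2^2) x) (take (2^2) y)) (map uminus (cd_mult 2 (cd_conj 2 (drop (2^2) y)) (drop (2^2) x))) @ vadd (cd_mult 2 (drop (2^2) y) (take (2^2) x)) (cd_mult 2 (drop (2^2) x) (cd_conj 2 (take (2^2) y)))"
    by (simp only: cd_mult.simps(2) Let_def)
  thus ?thesis by (simp add: eval_nat_numeral del: cd_mult.simps cd_conj.simps)
qed
lemma cc2s: "cd_conj 2 x = cd_conj 1 (take 2 x) @ map uminus (drop 2 x)"
proof -
  have "cd_conj (Suc 1) x = cd_conj 1 (take (2^1) x) @ map uminus (drop (2^1) x)"
    by (simp only: cd_conj.simps(2))
  thus ?thesis by (simp only: power_one_right Suc_1)
qed
lemma cc1: "cd_conj (Suc 0) [a0,a1] = [a0,-a1]"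
  proof - have "take (2^0) [a0,a1] = [a0]" "drop (2^0) [a0,a1] = [a1]" by simp_all
  then show ?thesis by simp qed
lemma cc2: "cd_conj 2 [a0,a1,a2,a3] = [a0,-a1,-a2,-a3]"
  by (simp add: cc2s cc1 del: cd_conj.simps)
lemma cm1: "cd_mult (Suc 0) [a0,a1] [b0,b1] = [a0*b0 - b1*a1, b1*a0 + a1*b0]"
  proof - have "take (2^0) [a0,a1] = [a0]" "drop (2^0) [a0,a1] = [a1]" "take (2^0) [b0,b1] = [b0]" "drop (2^0) [b0,b1] = [b1]" by simp_all
  then show ?thesis by (simp add: vadd_def Let_def) qed

lemma l2: "length x = 2 \<Longrightarrow> \<exists>a0 a1. x = [a0,a1]"
  by (auto simp add: length_Suc_conv numeral_eq_Suc)
lemma l4: "length x = 4 \<Longrightarrow> \<exists>a0 a1 a2 a3. x = [a0,a1,a2,a3]"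
  by (auto simp add: length_Suc_conv numeral_eq_Suc)
lemma l8: "length x = 8 \<Longrightarrow> \<exists>a0 a1 a2 a3 a4 a5 a6 a7. x = [a0,a1,a2,a3,a4,a5,a6,a7]"
  by (auto simp add: length_Suc_conv numeral_eq_Suc)

lemma comp1:
  assumes "length x = 2" "length x' = 2" "length y = 2" "length y' = 2"
  shows "vinner (cd_mult 1 x y) (cd_mult 1 x y') = vinner x x * vinner y y'"
    "vinner (cd_mult 1 x y) (cd_mult 1 x' y) = vinner x x' * vinner y y"
    "length (cd_mult 1 x y) = 2"
proof -
  obtain a0 a1 where x: "x = [a0,a1]" using l2[OF assms(1)] by blast
  obtain c0 c1 where x': "x' = [c0,c1]" using l2[OF assms(2)] by blast
  obtain b0 b1 where y: "y = [b0,b1]" using l2[OF assms(3)] by blast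
  obtain d0 d1 where y': "y' = [d0,d1]" using l2[OF assms(4)] by blast
  show "vinner (cd_mult 1 x y) (cd_mult 1 x y') = vinner x x * vinner y y'"
    unfolding x y y' by (simp add: cm3s cm2s cc2s cm1 cc1 vadd_def del: cd_mult.simps cd_conj.simps) (simp add: vinner_def, algebra)
  show "vinner (cd_mult 1 x y) (cd_mult 1 x' y) = vinner x x' * vinner y y"
    unfolding x x' y by (simp add: cm3s cm2s cc2s cm1 cc1 vadd_def del: cd_mult.simps cd_conj.simps) (simp add: vinner_def, algebra)
  show "length (cd_mult 1 x y) = 2"
    unfolding x y by (simp add: cm3s cm2s cc2s cm1 cc1 vadd_def del: cd_mult.simps cd_conj.simps)
qed

lemma comp2:
  assumes "length x = 4" "length x' = 4" "length y = 4" "length y' = 4"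
  shows "vinner (cd_mult 2 x y) (cd_mult 2 x y') = vinner x x * vinner y y'"
    "vinner (cd_mult 2 x y) (cd_mult 2 x' y) = vinner x x' * vinner y y"
    "length (cd_mult 2 x y) = 4"
proof -
  obtain a0 a1 a2 a3 where x: "x = [a0,a1,a2,a3]" using l4[OF assms(1)] by blast
  obtain c0 c1 c2 c3 where x': "x' = [c0,c1,c2,c3]" using l4[OF assms(2)] by blast
  obtain b0 b1 b2 b3 where y: "y = [b0,b1,b2,b3]" using l4[OF assms(3)] by blast
  obtain d0 d1 d2 d3 where y': "y' = [d0,d1,d2,d3]" using l4[OF assms(4)] by blast
  show "vinner (cd_mult 2 x y) (cd_mult 2 x y') = vinner x x * vinner y y'"
    unfolding x y y' by (simp add: cm3s cm2s cc2s cm1 cc1 vadd_def del: cd_mult.simps cd_conj.simps) (simp add: vinner_def, algebra)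
  show "vinner (cd_mult 2 x y) (cd_mult 2 x' y) = vinner x x' * vinner y y"
    unfolding x x' y by (simp add: cm3s cm2s cc2s cm1 cc1 vadd_def del: cd_mult.simps cd_conj.simps) (simp add: vinner_def, algebra)
  show "length (cd_mult 2 x y) = 4"
    unfolding x y by (simp add: cm3s cm2s cc2s cm1 cc1 vadd_def del: cd_mult.simps cd_conj.simps)
qed

lemma comp3:
  assumes "length x = 8" "length x' = 8" "length y = 8" "length y' = 8"
  shows "vinner (cd_mult 3 x y) (cd_mult 3 x y') = vinner x x * vinner y y'"
    "vinner (cd_mult 3 x y) (cd_mult 3 x' y) = vinner x x' * vinner y y"
    "length (cd_mult 3 x y) = 8"
proof -
  obtain a0 a1 a2 a3 a4 a5 a6 a7 where x: "x = [a0,a1,a2,a3,a4,a5,a6,a7]" using l8[OF assms(1)] by blast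
  obtain c0 c1 c2 c3 c4 c5 c6 c7 where x': "x' = [c0,c1,c2,c3,c4,c5,c6,c7]" using l8[OF assms(2)] by blast
  obtain b0 b1 b2 b3 b4 b5 b6 b7 where y: "y = [b0,b1,b2,b3,b4,b5,b6,b7]" using l8[OF assms(3)] by blast
  obtain d0 d1 d2 d3 d4 d5 d6 d7 where y': "y' = [d0,d1,d2,d3,d4,d5,d6,d7]" using l8[OF assms(4)] by blast
  show "vinner (cd_mult 3 x y) (cd_mult 3 x y') = vinner x x * vinner y y'"
    unfolding x y y' by (simp add: cm3s cm2s cc2s cm1 cc1 vadd_def del: cd_mult.simps cd_conj.simps) (simp add: vinner_def, algebra)
  show "vinner (cd_mult 3 x y) (cd_mult 3 x' y) = vinner x x' * vinner y y"
    unfolding x x' y by (simp add: cm3s cm2s cc2s cm1 cc1 vadd_def del: cd_mult.simps cd_conj.simps) (simp add: vinner_def, algebra)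
  show "length (cd_mult 3 x y) = 8"
    unfolding x y by (simp add: cm3s cm2s cc2s cm1 cc1 vadd_def del: cd_mult.simps cd_conj.simps)
qed

lemma comp_ax:
  assumes "k \<in> {1,2,3::nat}" "length x = 2^k" "length x' = 2^k" "length y = 2^k" "length y' = 2^k"
  shows "vinner (cd_mult k x y) (cd_mult k x y') = vinner x x * vinner y y'"
    "vinner (cd_mult k x y) (cd_mult k x' y) = vinner x x' * vinner y y"
    "length (cd_mult k x y) = 2^k"
  using assms comp1[of x x' y y'] comp2[of x x' y y'] comp3[of x x' y y'] by auto

lemma witness:
  assumes "k \<in> {1,2,3::nat}"
  shows "vinner (cd_mult k (1 # replicate (2^k-1) 0) (1 # replicate (2^k-1) 0))
                (cd_mult k (0 # 1 # replicate (2^k-2) 0) (0 # 1 # replicate (2^k-2) 0)) = -1 \<and>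
         vinner (1 # replicate (2^k-1) 0) (1 # replicate (2^k-1) 0) = 1 \<and>
         vinner (0 # 1 # replicate (2^k-2) 0) (0 # 1 # replicate (2^k-2) 0) = 1 \<and>
         vinner (1 # replicate (2^k-1) 0) (0 # 1 # replicate (2^k-2) 0) = 0"
proof -
  have "k = 1 \<or> k = 2 \<or> k = 3" using assms by auto
  then show ?thesis
  proof (elim disjE)
    assume k: "k = 1"
    have "(1::real) # replicate (2^k-1) 0 = [1,0]" "(0::real) # 1 # replicate (2^k-2) 0 = [0,1]"
      unfolding k by (simp_all add: numeral_eq_Suc)
    thus ?thesis unfolding k by (simp add: cm3s cm2s cc2s cm1 cc1 vadd_def del: cd_mult.simps cd_conj.simps) (simp add: vinner_def)
  next
    assume k: "k = 2"
    have "(1::real) # replicate (2^k-1) 0 = [1,0,0,0]" "(0::real) # 1 # replicate (2^k-2) 0 = [0,1,0,0]"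
      unfolding k by (simp_all add: numeral_eq_Suc)
    thus ?thesis unfolding k by (simp add: cm3s cm2s cc2s cm1 cc1 vadd_def del: cd_mult.simps cd_conj.simps) (simp add: vinner_def)
  next
    assume k: "k = 3"
    have "(1::real) # replicate (2^k-1) 0 = [1,0,0,0,0,0,0,0]" "(0::real) # 1 # replicate (2^k-2) 0 = [0,1,0,0,0,0,0,0]"
      unfolding k by (simp_all add: numeral_eq_Suc)
    thus ?thesis unfolding k by (simp add: cm3s cm2s cc2s cm1 cc1 vadd_def del: cd_mult.simps cd_conj.simps) (simp add: vinner_def)
  qed
qed

lemma tri_sum:
  fixes u v w :: "nat \<Rightarrow> real"
  assumes "finite I" "(\<Sum>i\<in>I. (u i)\<^sup>2) = 1" "(\<Sum>i\<in>I. (v i)\<^sup>2) = 1" "(\<Sum>i\<in>I. (w i)\<^sup>2) = 1"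
  shows "arccos (\<Sum>i\<in>I. u i * w i) \<le> arccos (\<Sum>i\<in>I. u i * v i) + arccos (\<Sum>i\<in>I. v i * w i)"
proof -
  define p where "p = (\<Sum>i\<in>I. u i * v i)"
  define q where "q = (\<Sum>i\<in>I. v i * w i)"
  define r where "r = (\<Sum>i\<in>I. u i * w i)"
  have p1: "p\<^sup>2 \<le> 1" using Cauchy_Schwarz_ineq_sum[of u v I] assms unfolding p_def by simp
  have q1: "q\<^sup>2 \<le> 1" using Cauchy_Schwarz_ineq_sum[of v w I] assms unfolding q_def by simp
  have r1: "r\<^sup>2 \<le> 1" using Cauchy_Schwarz_ineq_sum[of u w I] assms unfolding r_def by simp
  have CS: "(\<Sum>i\<in>I. (u i - p * v i) * (w i - q * v i))\<^sup>2 \<le> (\<Sum>i\<in>I. (u i - p * v i)\<^sup>2) * (\<Sum>i\<in>I. (w i - q * v i)\<^sup>2)"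
    by (rule Cauchy_Schwarz_ineq_sum)
  have e1: "(\<Sum>i\<in>I. (u i - p * v i) * (w i - q * v i)) = r - p*q"
  proof -
    have "(\<Sum>i\<in>I. (u i - p * v i) * (w i - q * v i)) = (\<Sum>i\<in>I. u i * w i - q * (u i * v i) - p * (v i * w i) + p * q * (v i)\<^sup>2)"
      by (rule sum.cong) (simp_all add: algebra_simps power2_eq_square)
    also have "\<dots> = r - q * p - p * q + p * q * 1"
      by (simp only: sum.distrib sum_subtractf sum_distrib_left[symmetric] p_def[symmetric] q_def[symmetric] r_def[symmetric] assms(3))
    finally show ?thesis by simp
  qed
  have e2: "(\<Sum>i\<in>I. (u i - p * v i)\<^sup>2) = 1 - p\<^sup>2"
  proof -
    have "(\<Sum>i\<in>I. (u i - p * v i)\<^sup>2) = (\<Sum>i\<in>I. (u i)\<^sup>2 - 2 * p * (u i * v i) + p\<^sup>2 * (v i)\<^sup>2)"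
      by (rule sum.cong) (simp_all add: algebra_simps power2_eq_square)
    also have "\<dots> = 1 - 2 * p * p + p\<^sup>2 * 1"
      by (simp only: sum.distrib sum_subtractf sum_distrib_left[symmetric] p_def[symmetric] assms(2,3))
    finally show ?thesis by (simp add: power2_eq_square)
  qed
  have e3: "(\<Sum>i\<in>I. (w i - q * v i)\<^sup>2) = 1 - q\<^sup>2"
  proof -
    have "(\<Sum>i\<in>I. (w i - q * v i)\<^sup>2) = (\<Sum>i\<in>I. (w i)\<^sup>2 - 2 * q * (v i * w i) + q\<^sup>2 * (v i)\<^sup>2)"
      by (rule sum.cong) (simp_all add: algebra_simps power2_eq_square)
    also have "\<dots> = 1 - 2 * q * q + q\<^sup>2 * 1"
      by (simp only: sum.distrib sum_subtractf sum_distrib_left[symmetric] q_def[symmetric] assms(4,3))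
    finally show ?thesis by (simp add: power2_eq_square)
  qed
  have "(r - p*q)\<^sup>2 \<le> (1 - p\<^sup>2) * (1 - q\<^sup>2)" using CS e1 e2 e3 by simp
  hence "\<bar>r - p*q\<bar> \<le> sqrt (1 - p\<^sup>2) * sqrt (1 - q\<^sup>2)"
    by (metis real_sqrt_abs real_sqrt_le_mono real_sqrt_mult)
  hence rge: "r \<ge> p*q - sqrt (1 - p\<^sup>2) * sqrt (1 - q\<^sup>2)" by linarith
  have pa: "-1 \<le> p" "p \<le> 1" using p1 abs_le_square_iff[of p 1] by (auto simp: abs_le_iff)
  have qa: "-1 \<le> q" "q \<le> 1" using q1 abs_le_square_iff[of q 1] by (auto simp: abs_le_iff)
  have ra: "-1 \<le> r" "r \<le> 1" using r1 abs_le_square_iff[of r 1] by (auto simp: abs_le_iff)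
  define a where "a = arccos p"
  define b where "b = arccos q"
  have a0: "0 \<le> a" "a \<le> pi" using pa unfolding a_def by (auto intro: arccos_lbound arccos_ubound)
  have b0: "0 \<le> b" "b \<le> pi" using qa unfolding b_def by (auto intro: arccos_lbound arccos_ubound)
  have cab: "cos (a + b) = p*q - sqrt (1 - p\<^sup>2) * sqrt (1 - q\<^sup>2)"
    unfolding a_def b_def cos_add using pa qa by (simp add: sin_arccos)
  show ?thesis
  proof (cases "a + b \<le> pi")
    case True
    have "arccos r \<le> arccos (cos (a+b))"
      using rge cab ra cos_ge_minus_one[of "a+b"] by (intro arccos_le_arccos) auto
    also have "\<dots> = a + b" using True a0 b0 by (intro arccos_cos) auto
    finally show ?thesis unfolding r_def a_def b_def p_def q_def .
  next
    case False
    then show ?thesis using arccos_ubound[of r] ra unfolding r_def a_def b_def p_def q_def by linarith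
  qed
qed


lemma vinner_sum: "length y = length x \<Longrightarrow> vinner x y = (\<Sum>i\<in>{..<length x}. x!i * y!i)"
  unfolding vinner_def by (simp add: sum_list_sum_nth atLeast0LessThan)

lemma vinner_sq: "vinner x x = (\<Sum>i\<in>{..<length x}. (x!i)\<^sup>2)"
  by (simp add: vinner_sum power2_eq_square)

lemma sqrt2_bound: "(A::real) + B \<le> sqrt 2 * sqrt (A\<^sup>2 + B\<^sup>2)"
proof -
  have "A + B \<le> sqrt ((A+B)\<^sup>2)" by simp
  also have "\<dots> \<le> sqrt (2 * (A\<^sup>2 + B\<^sup>2))"
    by (rule real_sqrt_le_mono) (smt (verit) zero_le_power2[of "A-B"] power2_diff power2_sum)
  also have "\<dots> = sqrt 2 * sqrt (A\<^sup>2 + B\<^sup>2)" by (rule real_sqrt_mult)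
  finally show ?thesis .
qed

theorem proposition3:
  fixes n k :: nat
  assumes "n \<in> {1, 3, 7}" and "2 ^ k = n + 1"
  shows "lip_const (sph n \<times> sph n) prod_dist sph_dist (\<lambda>(x, y). cd_mult k x y) = sqrt 2"
proof -
  have k: "k \<in> {1,2,3}"
  proof -
    have "k \<noteq> 0"
    proof
      assume "k = 0" with assms show False by auto
    qed
    moreover have "k < 4"
    proof (rule ccontr)
      assume "\<not> k < 4"
      hence "(2::nat)^4 \<le> 2^k" by (intro power_increasing) auto
      thus False using assms by auto
    qed
    moreover have "k \<noteq> 2 \<or> n = 3" "k \<noteq> 1 \<or> n = 1" "k \<noteq> 3 \<or> n = 7" using assms by auto
    ultimately show ?thesis using assms by auto
  qed
  define N where "N = n + 1"
  have N: "N = 2^k" using assms N_def by simp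
  note cax = comp_ax[OF k]
  let ?M = "sph n \<times> sph n"
  let ?S = "{C. \<forall>a\<in>?M. \<forall>b\<in>?M. sph_dist ((\<lambda>(x, y). cd_mult k x y) a) ((\<lambda>(x, y). cd_mult k x y) b) \<le> C * prod_dist a b}"
  have upper: "sph_dist (cd_mult k x y) (cd_mult k x' y') \<le> sqrt 2 * prod_dist (x,y) (x',y')"
    if xs: "x \<in> sph n" "y \<in> sph n" "x' \<in> sph n" "y' \<in> sph n" for x y x' y'
  proof -
    have L: "length x = 2^k" "length y = 2^k" "length x' = 2^k" "length y' = 2^k"
      using xs assms(2) by (auto simp: sph_def)
    have U: "vinner x x = 1" "vinner y y = 1" "vinner x' x' = 1" "vinner y' y' = 1"
      using xs by (auto simp: sph_def)
    define u where "u = cd_mult k x y"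
    define v where "v = cd_mult k x y'"
    define w where "w = cd_mult k x' y'"
    have Lu: "length u = 2^k" "length v = 2^k" "length w = 2^k"
      unfolding u_def v_def w_def using cax(3) L by auto
    have Uu: "vinner u u = 1" "vinner v v = 1" "vinner w w = 1"
      unfolding u_def v_def w_def using cax(1) L U by auto
    have uv: "vinner u v = vinner y y'" unfolding u_def v_def using cax(1)[of x x y y'] L U by auto
    have vw: "vinner v w = vinner x x'" unfolding v_def w_def using cax(2)[of x x' y'] L U by auto
    have "arccos (vinner u w) \<le> arccos (vinner u v) + arccos (vinner v w)"
      using tri_sum[of "{..<2^k}" "\<lambda>i. u!i" "\<lambda>i. v!i" "\<lambda>i. w!i"] Uu Lu
      by (simp add: vinner_sum vinner_sq)
    also have "\<dots> = sph_dist x x' + sph_dist y y'" using uv vw by (simp add: sph_dist_def)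
    also have "\<dots> \<le> sqrt 2 * prod_dist (x,y) (x',y')"
      unfolding prod_dist_def by (simp add: sqrt2_bound)
    finally show ?thesis unfolding u_def w_def sph_dist_def .
  qed
  have pd0: "prod_dist a b \<ge> 0" for a b unfolding prod_dist_def by simp
  have "?S = {sqrt 2..}"
  proof (intro set_eqI iffI)
    fix C assume "C \<in> {sqrt 2..}"
    hence C: "sqrt 2 \<le> C" by simp
    show "C \<in> ?S"
    proof (clarsimp)
      fix x y x' y' assume "x \<in> sph n" "y \<in> sph n" "x' \<in> sph n" "y' \<in> sph n"
      hence "sph_dist (cd_mult k x y) (cd_mult k x' y') \<le> sqrt 2 * prod_dist (x,y) (x',y')"
        by (rule upper)
      also have "\<dots> \<le> C * prod_dist (x,y) (x',y')" using C pd0 by (intro mult_right_mono) auto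
      finally show "sph_dist (cd_mult k x y) (cd_mult k x' y') \<le> C * prod_dist (x,y) (x',y')" .
    qed
  next
    fix C assume C: "C \<in> ?S"
    define e0 :: "real list" where "e0 = 1 # replicate (2^k-1) 0"
    define e1 :: "real list" where "e1 = 0 # 1 # replicate (2^k-2) 0"
    have k2: "2 \<le> (2::nat)^k" using k by auto
    have "e0 \<in> sph n" "e1 \<in> sph n" using k2 assms(2) witness[OF k]
      by (auto simp: e0_def e1_def sph_def)
    hence "sph_dist (cd_mult k e0 e0) (cd_mult k e1 e1) \<le> C * prod_dist (e0,e0) (e1,e1)"
      using C by fastforce
    moreover have "sph_dist (cd_mult k e0 e0) (cd_mult k e1 e1) = pi"
      using witness[OF k] by (simp add: sph_dist_def e0_def e1_def)
    moreover have "vinner e0 e1 = 0" using witness[OF k] by (simp add: e0_def e1_def)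
    hence "prod_dist (e0,e0) (e1,e1) = pi / sqrt 2"
      by (simp add: prod_dist_def sph_dist_def power_divide real_sqrt_divide)
    ultimately have "pi \<le> C * (pi / sqrt 2)" by simp
    hence "sqrt 2 \<le> C" using pi_gt_zero by (simp add: field_simps)
    thus "C \<in> {sqrt 2..}" by simp
  qed
  thus ?thesis unfolding lip_const_def by simp
qed

end
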